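(* Let $\mathcal P_{XY}$ be any distribution on $\mathbb R^p\times\mathbb R$ and let $Z_i=(X_i,Y_i)$, $i=1,\dots,n+1$, be i.i.d. from $\mathcal P_{XY}$. Let $\mathcal Z,\mathcal X$ be the unordered sets $\{Z_1,\dots,Z_{n+1}\}$, $\{X_1,\dots,X_{n+1}\}$; let $V(z)=V(z;\mathcal Z)$ be a real-valued score function depending on the data only through $\mathcal Z$, with $V_i=V(Z_i;\mathcal Z)$; let $H:\mathbb R^p\times\mathbb R^p\to[0,1]$ be a localizer depending on the data only through $\mathcal X$, with $H(x,x)=1$. Put $H_{ij}=H(X_i,X_j)$, $p^H_{ij}=H_{ij}/\sum_{k=1}^{n+1}H_{ik}$, $\hat{\mathcal F}_i=\sum_{j=1}^{n+1}p^H_{ij}\delta_{V_j}$, $\hat{\mathcal F}=\sum_{j=1}^{n}p^H_{n+1,j}\delta_{V_j}+p^H_{n+1,n+1}\delta_{+\infty}$ and $\Gamma=\{\sum_{k\in I}p^H_{ik}: i\in\{1,\dots,n+1\},\ I\subseteq\{1,\dots,n+1\}\}$. Fix $\alpha\in(0,1)$. Let $\tilde\alpha_1$ be the smallest value and $\tilde\alpha_2$ the largest value in $\Gamma\cup\{0\}$ such that, respectively, $$\alpha_1:=\frac{1}{n+1}\sum_{i=1}^{n+1}\mathbb 1\{V_i\le Q(\tilde\alpha_1;\hat{\mathcal F}_i)\}\ge\alpha,\qquad \alpha_2:=\frac{1}{n+1}\sum_{i=1}^{n+1}\mathbb 1\{V_i\le Q(\tilde\alpha_2;\hat{\mathcal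 F}_i)\}<\alpha.$$ Let $\tilde\alpha=\tilde\alpha_1$ with probability $\frac{\alpha-\alpha_2}{\alpha_1-\alpha_2}$ and $\tilde\alpha=\tilde\alpha_2$ with probability $\frac{\alpha_1-\alpha}{\alpha_1-\alpha_2}$, using randomization independent of everything else. Then $\mathbb P\{V_{n+1}\le Q(\tilde\alpha;\hat{\mathcal F})\}=\alpha$.
   Context: For a distribution $\mathcal F$ on $\mathbb R\cup\{\pm\infty\}$, $Q(\alpha;\mathcal F)=\inf\{t:\mathbb P_{T\sim\mathcal F}(T\le t)\ge\alpha\}$ (so $Q(0;\mathcal F)=-\infty$). $\delta_v$ is the point mass at $v$. *)

theory Defs
  imports "HOL-Probability.Probability"
begin

text \<open>Finite discrete distributions on the extended reals, given by weights w j and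
  atoms v j over a finite index set I (i.e. sum over j in I of w j times a point mass at v j).\<close>

definition disc_cdf :: "(nat \<Rightarrow> real) \<Rightarrow> (nat \<Rightarrow> ereal) \<Rightarrow> nat set \<Rightarrow> ereal \<Rightarrow> real" where
  "disc_cdf w v I t = (\<Sum>j\<in>I. if v j \<le> t then w j else 0)"

definition quant :: "real \<Rightarrow> (nat \<Rightarrow> real) \<Rightarrow> (nat \<Rightarrow> ereal) \<Rightarrow> nat set \<Rightarrow> ereal" where
  "quant a w v I = Inf {t. disc_cdf w v I t \<ge> a}"

text \<open>Data z 0, ..., z n (the paper's Z_1..Z_(n+1); index n is the test point).\<close>

definition Zset :: "nat \<Rightarrow> (nat \<Rightarrow> 'x \<times> real) \<Rightarrow> ('x \<times> real) multiset" where
  "Zset n z = mset (map z [0..<Suc n])"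

definition Xset :: "nat \<Rightarrow> (nat \<Rightarrow> 'x \<times> real) \<Rightarrow> 'x multiset" where
  "Xset n z = image_mset fst (Zset n z)"

definition Vsc :: "(('x \<times> real) multiset \<Rightarrow> 'x \<times> real \<Rightarrow> real) \<Rightarrow> nat \<Rightarrow> (nat \<Rightarrow> 'x \<times> real) \<Rightarrow> nat \<Rightarrow> real" where
  "Vsc V n z j = V (Zset n z) (z j)"

definition Hloc :: "('x multiset \<Rightarrow> 'x \<Rightarrow> 'x \<Rightarrow> real) \<Rightarrow> nat \<Rightarrow> (nat \<Rightarrow> 'x \<times> real) \<Rightarrow> nat \<Rightarrow> nat \<Rightarrow> real" where
  "Hloc H n z i j = H (Xset n z) (fst (z i)) (fst (z j))"

definition pH :: "('x multiset \<Rightarrow> 'x \<Rightarrow> 'x \<Rightarrow> real) \<Rightarrow> nat \<Rightarrow> (nat \<Rightarrow> 'x \<times> real) \<Rightarrow> nat \<Rightarrow> nat \<Rightarrow> real" where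
  "pH H n z i j = Hloc H n z i j / (\<Sum>k\<le>n. Hloc H n z i k)"

definition QFi :: "(('x \<times> real) multiset \<Rightarrow> 'x \<times> real \<Rightarrow> real) \<Rightarrow> ('x multiset \<Rightarrow> 'x \<Rightarrow> 'x \<Rightarrow> real)
   \<Rightarrow> nat \<Rightarrow> (nat \<Rightarrow> 'x \<times> real) \<Rightarrow> nat \<Rightarrow> real \<Rightarrow> ereal" where
  "QFi V H n z i a = quant a (pH H n z i) (\<lambda>j. ereal (Vsc V n z j)) {..n}"

definition QF :: "(('x \<times> real) multiset \<Rightarrow> 'x \<times> real \<Rightarrow> real) \<Rightarrow> ('x multiset \<Rightarrow> 'x \<Rightarrow> 'x \<Rightarrow> real)
   \<Rightarrow> nat \<Rightarrow> (nat \<Rightarrow> 'x \<times> real) \<Rightarrow> real \<Rightarrow> ereal" where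
  "QF V H n z a = quant a (pH H n z n) (\<lambda>j. if j = n then \<infinity> else ereal (Vsc V n z j)) {..n}"

definition Gam :: "('x multiset \<Rightarrow> 'x \<Rightarrow> 'x \<Rightarrow> real) \<Rightarrow> nat \<Rightarrow> (nat \<Rightarrow> 'x \<times> real) \<Rightarrow> real set" where
  "Gam H n z = {(\<Sum>k\<in>I. pH H n z i k) | i I. i \<le> n \<and> I \<subseteq> {..n}}"

definition acov :: "(('x \<times> real) multiset \<Rightarrow> 'x \<times> real \<Rightarrow> real) \<Rightarrow> ('x multiset \<Rightarrow> 'x \<Rightarrow> 'x \<Rightarrow> real)
   \<Rightarrow> nat \<Rightarrow> (nat \<Rightarrow> 'x \<times> real) \<Rightarrow> real \<Rightarrow> real" where
  "acov V H n z a = (\<Sum>i\<le>n. if ereal (Vsc V n z i) \<le> QFi V H n z i a then 1 else 0) / real (Suc n)"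

definition atil1 where
  "atil1 V H n z al = Min {g \<in> Gam H n z \<union> {0}. acov V H n z g \<ge> al}"

definition atil2 where
  "atil2 V H n z al = Max {g \<in> Gam H n z \<union> {0}. acov V H n z g < al}"

text \<open>Randomized choice: u is an independent Uniform[0,1] variable; atil1 is chosen iff
  u <= (al - alpha2)/(alpha1 - alpha2), which has exactly that probability.\<close>
definition atil where
  "atil V H n z u al =
     (let a1 = acov V H n z (atil1 V H n z al); a2 = acov V H n z (atil2 V H n z al) in
      if u \<le> (al - a2) / (a1 - a2) then atil1 V H n z al else atil2 V H n z al)"

end

theory Submission
  imports Defs
begin


lemma quant_char:
  assumes fin: "finite I" and w: "\<And>j. j \<in> I \<Longrightarrow> 0 \<le> w j"
  shows "(ereal x \<le> quant a w v I) \<longleftrightarrow> (\<Sum>j\<in>I. if v j < ereal x then w j else 0) < a"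
proof
  assume h: "ereal x \<le> quant a w v I"
  define t where "t = Max (insert (-\<infinity>) {v j | j. j \<in> I \<and> v j < ereal x})"
  have finS: "finite {v j | j. j \<in> I \<and> v j < ereal x}" using fin by auto
  have tlt: "t < ereal x" unfolding t_def using finS by (subst Max_less_iff) auto
  have eq: "\<And>j. j \<in> I \<Longrightarrow> (v j \<le> t) = (v j < ereal x)"
  proof -
    fix j assume j: "j \<in> I"
    show "(v j \<le> t) = (v j < ereal x)"
    proof
      assume "v j \<le> t" thus "v j < ereal x" using tlt by simp
    next
      assume "v j < ereal x" thus "v j \<le> t" unfolding t_def using finS j by (intro Max_ge) auto
    qed
  qed
  have "disc_cdf w v I t = (\<Sum>j\<in>I. if v j < ereal x then w j else 0)"
    unfolding disc_cdf_def using eq by (intro sum.cong) auto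
  moreover have "\<not> a \<le> disc_cdf w v I t"
  proof
    assume "a \<le> disc_cdf w v I t"
    hence "quant a w v I \<le> t" unfolding quant_def by (intro Inf_lower) auto
    thus False using h tlt by simp
  qed
  ultimately show "(\<Sum>j\<in>I. if v j < ereal x then w j else 0) < a" by simp
next
  assume h: "(\<Sum>j\<in>I. if v j < ereal x then w j else 0) < a"
  show "ereal x \<le> quant a w v I" unfolding quant_def
  proof (rule Inf_greatest)
    fix t assume "t \<in> {t. a \<le> disc_cdf w v I t}"
    hence ta: "a \<le> disc_cdf w v I t" by simp
    show "ereal x \<le> t"
    proof (rule ccontr)
      assume "\<not> ereal x \<le> t"
      hence "t < ereal x" by simp
      hence "disc_cdf w v I t \<le> (\<Sum>j\<in>I. if v j < ereal x then w j else 0)"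
        unfolding disc_cdf_def using w by (intro sum_mono) auto
      thus False using h ta by simp
    qed
  qed
qed



definition sc where "sc V H n z i = (\<Sum>j\<le>n. if Vsc V n z j < Vsc V n z i then pH H n z i j else 0)"
definition acv where "acv V H n z g = (\<Sum>i\<le>n. if sc V H n z i < g then 1 else 0::real) / real (Suc n)"

locale Hok =
  fixes H :: "'x multiset \<Rightarrow> 'x \<Rightarrow> 'x \<Rightarrow> real"
  assumes H_range: "\<And>M x y. 0 \<le> H M x y \<and> H M x y \<le> 1"
    and H_diag: "\<And>M x. H M x x = 1"
begin

lemma denom_ge1: "i \<le> n \<Longrightarrow> 1 \<le> (\<Sum>k\<le>n. Hloc H n z i k)"
proof -
  assume i: "i \<le> n"
  have "Hloc H n z i i \<le> (\<Sum>k\<le>n. Hloc H n z i k)"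
    using i by (intro member_le_sum) (auto simp: Hloc_def H_range)
  thus ?thesis by (simp add: Hloc_def H_diag)
qed

lemma pH_nonneg: "i \<le> n \<Longrightarrow> 0 \<le> pH H n z i j"
  unfolding pH_def using denom_ge1[of i n z] by (intro divide_nonneg_nonneg) (auto simp: Hloc_def H_range)

lemma pH_sum: "i \<le> n \<Longrightarrow> (\<Sum>k\<le>n. pH H n z i k) = 1"
  unfolding pH_def using denom_ge1[of i n z] by (simp add: sum_divide_distrib[symmetric])

lemma pH_pos: "i \<le> n \<Longrightarrow> 0 < pH H n z i i"
  unfolding pH_def using denom_ge1[of i n z] by (simp add: Hloc_def H_diag)

lemma QFi_char: "i \<le> n \<Longrightarrow> (ereal (Vsc V n z i) \<le> QFi V H n z i a) \<longleftrightarrow> sc V H n z i < a"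
  unfolding QFi_def sc_def by (subst quant_char) (auto simp: pH_nonneg)

lemma QF_char: "(ereal (Vsc V n z n) \<le> QF V H n z a) \<longleftrightarrow> sc V H n z n < a"
  unfolding QF_def sc_def by (subst quant_char) (auto simp: pH_nonneg intro!: sum.cong arg_cong2[where f="(<)"])

lemma acov_eq: "acov V H n z g = acv V H n z g"
  unfolding acov_def acv_def by (auto simp: QFi_char intro!: sum.cong arg_cong2[where f="(/)"])

lemma sc_nonneg: "i \<le> n \<Longrightarrow> 0 \<le> sc V H n z i"
  unfolding sc_def by (intro sum_nonneg) (auto simp: pH_nonneg)

lemma sc_lt1: "i \<le> n \<Longrightarrow> sc V H n z i < 1"
proof -
  assume i: "i \<le> n"
  have "sc V H n z i = (\<Sum>j\<in>{..n}-{i}. if Vsc V n z j < Vsc V n z i then pH H n z i j else 0)"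
    unfolding sc_def using i by (subst sum.remove[of _ i]) auto
  also have "\<dots> \<le> (\<Sum>j\<in>{..n}-{i}. pH H n z i j)"
    by (intro sum_mono) (auto simp: pH_nonneg i)
  also have "\<dots> = 1 - pH H n z i i" using pH_sum[OF i, of z] i
    by (simp add: sum_diff1)
  finally show ?thesis using pH_pos[OF i, of z] by simp
qed

lemma acv_0: "acv V H n z 0 = 0"
  unfolding acv_def using sc_nonneg by (auto intro!: sum.neutral simp: not_less)

lemma acv_1: "acv V H n z 1 = 1"
  unfolding acv_def using sc_lt1 by simp

lemma acv_mono: "g \<le> g' \<Longrightarrow> acv V H n z g \<le> acv V H n z g'"
  unfolding acv_def by (intro divide_right_mono sum_mono) auto

lemma one_Gam: "1 \<in> Gam H n z"
  unfolding Gam_def using pH_sum[of 0 n z] by (auto intro!: exI[of _ 0] exI[of _ "{..n}"])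

lemma Gam_le1: "g \<in> Gam H n z \<Longrightarrow> 0 \<le> g \<and> g \<le> 1"
proof -
  assume "g \<in> Gam H n z"
  then obtain i I where g: "g = (\<Sum>k\<in>I. pH H n z i k)" "i \<le> n" "I \<subseteq> {..n}" unfolding Gam_def by auto
  have "g \<le> (\<Sum>k\<le>n. pH H n z i k)" unfolding g(1) using g by (intro sum_mono2) (auto simp: pH_nonneg)
  moreover have "0 \<le> g" using g by (auto intro!: sum_nonneg simp: pH_nonneg)
  ultimately show ?thesis using pH_sum[OF g(2)] by simp
qed

end


lemma mset_upt_Suc: "mset [0..<Suc n] = mset_set {..n}"
  by (simp only: mset_upt atLeast0LessThan lessThan_Suc_atMost)

lemma Zset_alt: "Zset n z = image_mset z (mset_set {..n})"
  by (simp only: Zset_def mset_map mset_upt_Suc)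

lemma Zset_perm:
  assumes tau: "bij_betw \<tau> {..n} {..n}" and zz: "\<And>k. k \<le> n \<Longrightarrow> z' k = z (\<tau> k)"
  shows "Zset n z' = Zset n z"
proof -
  have "Zset n z' = image_mset z' (mset_set {..n})"
    by (rule Zset_alt)
  also have "\<dots> = image_mset (z \<circ> \<tau>) (mset_set {..n})"
    by (intro image_mset_cong) (simp add: zz)
  also have "\<dots> = image_mset z (image_mset \<tau> (mset_set {..n}))" by (simp add: multiset.map_comp)
  also have "\<dots> = image_mset z (mset_set {..n})"
    using tau by (simp add: image_mset_mset_set bij_betw_def)
  also have "\<dots> = Zset n z"
    by (rule Zset_alt[symmetric])
  finally show ?thesis .
qed

context
  fixes \<tau> :: "nat \<Rightarrow> nat" and n :: nat and z z' :: "nat \<Rightarrow> 'x \<times> real"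
  assumes tau: "bij_betw \<tau> {..n} {..n}" and zz: "\<And>k. k \<le> n \<Longrightarrow> z' k = z (\<tau> k)"
begin

lemma tau_in: "k \<le> n \<Longrightarrow> \<tau> k \<le> n" using tau by (auto simp: bij_betw_def)

lemma Zset_eq: "Zset n z' = Zset n z" using Zset_perm[of \<tau> n z' z] tau zz by blast

lemma Vsc_perm: "j \<le> n \<Longrightarrow> Vsc V n z' j = Vsc V n z (\<tau> j)"
  unfolding Vsc_def using Zset_eq zz by simp

lemma Hloc_perm: "i \<le> n \<Longrightarrow> j \<le> n \<Longrightarrow> Hloc H n z' i j = Hloc H n z (\<tau> i) (\<tau> j)"
  unfolding Hloc_def Xset_def using Zset_eq zz by simp

lemma pH_perm: "i \<le> n \<Longrightarrow> j \<le> n \<Longrightarrow> pH H n z' i j = pH H n z (\<tau> i) (\<tau> j)"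
proof -
  assume i: "i \<le> n" and j: "j \<le> n"
  have "(\<Sum>k\<le>n. Hloc H n z' i k) = (\<Sum>k\<le>n. Hloc H n z (\<tau> i) (\<tau> k))"
    using i by (intro sum.cong) (auto simp: Hloc_perm)
  also have "\<dots> = (\<Sum>k\<le>n. Hloc H n z (\<tau> i) k)"
    using sum.reindex_bij_betw[OF tau, of "\<lambda>k. Hloc H n z (\<tau> i) k"] by simp
  finally show ?thesis unfolding pH_def using i j by (simp add: Hloc_perm)
qed

lemma sc_perm: "i \<le> n \<Longrightarrow> sc V H n z' i = sc V H n z (\<tau> i)"
proof -
  assume i: "i \<le> n"
  have "sc V H n z' i = (\<Sum>j\<le>n. if Vsc V n z (\<tau> j) < Vsc V n z (\<tau> i) then pH H n z (\<tau> i) (\<tau> j) else 0)"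
    unfolding sc_def using i by (intro sum.cong) (auto simp: Vsc_perm pH_perm)
  also have "\<dots> = sc V H n z (\<tau> i)"
    unfolding sc_def using sum.reindex_bij_betw[OF tau, of "\<lambda>j. if Vsc V n z j < Vsc V n z (\<tau> i) then pH H n z (\<tau> i) j else 0"] by simp
  finally show ?thesis .
qed

lemma acv_perm: "acv V H n z' g = acv V H n z g"
proof -
  have "(\<Sum>i\<le>n. if sc V H n z' i < g then 1 else 0::real) = (\<Sum>i\<le>n. if sc V H n z (\<tau> i) < g then 1 else 0::real)"
    by (intro sum.cong) (auto simp: sc_perm)
  also have "\<dots> = (\<Sum>i\<le>n. if sc V H n z i < g then 1 else 0::real)"
    using sum.reindex_bij_betw[OF tau, of "\<lambda>i. if sc V H n z i < g then 1 else 0::real"] by simp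
  finally show ?thesis unfolding acv_def by simp
qed

lemma Gam_perm_sub: "Gam H n z' \<subseteq> Gam H n z"
proof
  fix g assume "g \<in> Gam H n z'"
  then obtain i I where g: "g = (\<Sum>k\<in>I. pH H n z' i k)" "i \<le> n" "I \<subseteq> {..n}" unfolding Gam_def by auto
  have "g = (\<Sum>k\<in>I. pH H n z (\<tau> i) (\<tau> k))" unfolding g(1) using g by (intro sum.cong) (auto simp: pH_perm)
  also have "\<dots> = (\<Sum>k\<in>\<tau> ` I. pH H n z (\<tau> i) k)"
    using g(3) tau by (subst sum.reindex) (auto simp: bij_betw_def intro: inj_on_subset)
  finally show "g \<in> Gam H n z" unfolding Gam_def using g tau_in by (auto intro!: exI[of _ "\<tau> i"] exI[of _ "\<tau> ` I"])
qed

end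

lemma bij_inv:
  assumes tau: "bij_betw \<tau> {..n} {..n}" and inv: "\<And>k. k \<le> n \<Longrightarrow> \<tau> (\<tau> k) = k"
    and zz: "\<And>k. k \<le> n \<Longrightarrow> z' k = z (\<tau> k)"
  shows "\<And>k. k \<le> n \<Longrightarrow> z k = z' (\<tau> k)"
proof -
  fix k assume k: "k \<le> n"
  have "\<tau> k \<le> n" using tau k by (auto simp: bij_betw_def)
  thus "z k = z' (\<tau> k)" using zz[of "\<tau> k"] inv[OF k] by simp
qed

lemma Gam_perm:
  assumes tau: "bij_betw \<tau> {..n} {..n}" and inv: "\<And>k. k \<le> n \<Longrightarrow> \<tau> (\<tau> k) = k"
    and zz: "\<And>k. k \<le> n \<Longrightarrow> z' k = z (\<tau> k)"
  shows "Gam H n z' = Gam H n z"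
proof -
  have a: "\<And>k. k \<le> n \<Longrightarrow> z k = z' (\<tau> k)" using bij_inv[of \<tau> n z' z] tau inv zz by blast
  show ?thesis using Gam_perm_sub[of \<tau> n z' z H] Gam_perm_sub[of \<tau> n z z' H] tau zz a by blast
qed

lemma atil12_perm:
  assumes tau: "bij_betw \<tau> {..n} {..n}" and inv: "\<And>k. k \<le> n \<Longrightarrow> \<tau> (\<tau> k) = k"
    and zz: "\<And>k. k \<le> n \<Longrightarrow> z' k = z (\<tau> k)" and "Hok H"
  shows "atil1 V H n z' al = atil1 V H n z al" "atil2 V H n z' al = atil2 V H n z al"
proof -
  have g: "Gam H n z' = Gam H n z" using Gam_perm[of \<tau> n z' z] tau inv zz by blast
  have a: "\<And>g. acv V H n z' g = acv V H n z g" using acv_perm[of \<tau> n z' z] tau zz by blast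
  show "atil1 V H n z' al = atil1 V H n z al" "atil2 V H n z' al = atil2 V H n z al"
    unfolding atil1_def atil2_def g Hok.acov_eq[OF \<open>Hok H\<close>] a by simp_all
qed



definition Idx :: "nat \<Rightarrow> (nat \<times> nat set) set" where "Idx n = {..n} \<times> Pow {..n}"
definition gm where "gm H n z k = (\<Sum>j\<in>snd k. pH H n z (fst k) j)"

lemma Idx_fin: "finite (Idx n)" and Idx_ne: "Idx n \<noteq> {}"
  unfolding Idx_def by auto

lemma Gam_eq: "Gam H n z = (\<lambda>k. gm H n z k) ` Idx n"
proof (rule set_eqI)
  fix g
  show "g \<in> Gam H n z \<longleftrightarrow> g \<in> (\<lambda>k. gm H n z k) ` Idx n"
  proof
    assume "g \<in> Gam H n z"
    then obtain i I where "g = (\<Sum>k\<in>I. pH H n z i k)" "i \<le> n" "I \<subseteq> {..n}" unfolding Gam_def by auto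
    thus "g \<in> (\<lambda>k. gm H n z k) ` Idx n" unfolding Idx_def gm_def by (intro image_eqI[of _ _ "(i,I)"]) auto
  next
    assume "g \<in> (\<lambda>k. gm H n z k) ` Idx n"
    then obtain i I where "g = gm H n z (i,I)" "i \<le> n" "I \<subseteq> {..n}" unfolding Idx_def by auto
    thus "g \<in> Gam H n z" unfolding Gam_def gm_def by auto
  qed
qed

context Hok begin

context fixes al :: real assumes al: "0 < al" "al \<le> 1" begin

definition S1 where "S1 V n z = {g \<in> Gam H n z \<union> {0}. al \<le> acv V H n z g}"
definition S2 where "S2 V n z = {g \<in> Gam H n z \<union> {0}. acv V H n z g < al}"

lemma S1_fin: "finite (S1 V n z)" unfolding S1_def Gam_eq using Idx_fin by auto
lemma S2_fin: "finite (S2 V n z)" unfolding S2_def Gam_eq using Idx_fin by auto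
lemma one_S1: "1 \<in> S1 V n z" unfolding S1_def using one_Gam acv_1 al by auto
lemma zero_S2: "0 \<in> S2 V n z" unfolding S2_def using acv_0 al by auto

lemma a1_S1: "atil1 V H n z al \<in> S1 V n z"
  unfolding atil1_def acov_eq using Min_in[OF S1_fin] one_S1 unfolding S1_def by blast
lemma a2_S2: "atil2 V H n z al \<in> S2 V n z"
  unfolding atil2_def acov_eq using Max_in[OF S2_fin] zero_S2 unfolding S2_def by blast

lemma c1_ge: "al \<le> acv V H n z (atil1 V H n z al)" using a1_S1 unfolding S1_def by auto
lemma c2_lt: "acv V H n z (atil2 V H n z al) < al" using a2_S2 unfolding S2_def by auto
lemma a2_lt_a1: "atil2 V H n z al < atil1 V H n z al"
proof (rule ccontr)
  assume "\<not> ?thesis"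
  hence "acv V H n z (atil1 V H n z al) \<le> acv V H n z (atil2 V H n z al)" by (intro acv_mono) simp
  thus False using c1_ge[of V n z] c2_lt[of V n z] by linarith
qed

lemma a1_alt: "atil1 V H n z al = Min ((\<lambda>k. if al \<le> acv V H n z (gm H n z k) then gm H n z k else 1) ` Idx n)"
proof -
  have "{g \<in> Gam H n z \<union> {0}. acov V H n z g \<ge> al} = S1 V n z" unfolding S1_def acov_eq by simp
  also have "S1 V n z = (\<lambda>k. if al \<le> acv V H n z (gm H n z k) then gm H n z k else 1) ` Idx n"
  proof
    show "S1 V n z \<subseteq> (\<lambda>k. if al \<le> acv V H n z (gm H n z k) then gm H n z k else 1) ` Idx n"
    proof
      fix g assume g: "g \<in> S1 V n z"
      hence "g \<noteq> 0" unfolding S1_def using acv_0 al by auto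
      with g obtain k where "k \<in> Idx n" "g = gm H n z k" "al \<le> acv V H n z g" unfolding S1_def Gam_eq by auto
      thus "g \<in> (\<lambda>k. if al \<le> acv V H n z (gm H n z k) then gm H n z k else 1) ` Idx n" by force
    qed
  next
    show "(\<lambda>k. if al \<le> acv V H n z (gm H n z k) then gm H n z k else 1) ` Idx n \<subseteq> S1 V n z"
      using one_S1 unfolding S1_def Gam_eq by auto
  qed
  finally show ?thesis unfolding atil1_def by simp
qed

lemma a2_alt: "atil2 V H n z al = max 0 (Max ((\<lambda>k. if acv V H n z (gm H n z k) < al then gm H n z k else 0) ` Idx n))"
proof -
  let ?T = "(\<lambda>k. if acv V H n z (gm H n z k) < al then gm H n z k else 0) ` Idx n"
  have "{g \<in> Gam H n z \<union> {0}. acov V H n z g < al} = S2 V n z" unfolding S2_def acov_eq by simp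
  also have "S2 V n z = insert 0 ?T"
    using zero_S2 unfolding S2_def Gam_eq by auto
  finally have "atil2 V H n z al = Max (insert 0 ?T)" unfolding atil2_def by simp
  also have "\<dots> = max 0 (Max ?T)" by (rule Max_insert) (use Idx_fin Idx_ne in auto)
  finally show ?thesis .
qed

end
end


locale Meas = Hok H for H :: "'x multiset \<Rightarrow> 'x \<Rightarrow> 'x \<Rightarrow> real" +
  fixes M :: "(nat \<Rightarrow> 'x \<times> real) measure" and V n
  assumes V_meas: "\<And>j. j \<le> n \<Longrightarrow> (\<lambda>z. Vsc V n z j) \<in> borel_measurable M"
    and H_meas: "\<And>i j. i \<le> n \<Longrightarrow> j \<le> n \<Longrightarrow> (\<lambda>z. Hloc H n z i j) \<in> borel_measurable M"
begin

lemma pH_meas: "i \<le> n \<Longrightarrow> j \<le> n \<Longrightarrow> (\<lambda>z. pH H n z i j) \<in> borel_measurable M"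
  unfolding pH_def by (intro borel_measurable_divide H_meas borel_measurable_sum) auto

lemma sc_meas: "i \<le> n \<Longrightarrow> (\<lambda>z. sc V H n z i) \<in> borel_measurable M"
  unfolding sc_def
  by (intro borel_measurable_sum measurable_If pH_meas borel_measurable_const)
     (auto intro!: borel_measurable_less V_meas)

lemma gm_meas: "k \<in> Idx n \<Longrightarrow> (\<lambda>z. gm H n z k) \<in> borel_measurable M"
  unfolding gm_def Idx_def
  by (intro borel_measurable_sum pH_meas) auto

lemma acv_meas: "f \<in> borel_measurable M \<Longrightarrow> (\<lambda>z. acv V H n z (f z)) \<in> borel_measurable M"
  unfolding acv_def
  by (intro borel_measurable_divide borel_measurable_sum measurable_If borel_measurable_const)
     (auto intro!: borel_measurable_less sc_meas)

context fixes al :: real assumes al: "0 < al" "al \<le> 1" begin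

lemma a1_meas: "(\<lambda>z. atil1 V H n z al) \<in> borel_measurable M"
  unfolding a1_alt[OF al]
  by (intro borel_measurable_Min Idx_fin measurable_If gm_meas borel_measurable_const)
     (auto intro!: borel_measurable_le acv_meas gm_meas)

lemma a2_meas: "(\<lambda>z. atil2 V H n z al) \<in> borel_measurable M"
  unfolding a2_alt[OF al]
  by (intro borel_measurable_max borel_measurable_Max Idx_fin measurable_If gm_meas borel_measurable_const)
     (auto intro!: borel_measurable_less acv_meas gm_meas)

end
end


theorem theorem2:
  fixes P :: "((real ^ 'p) \<times> real) measure"
    and n :: nat
    and V :: "((real ^ 'p) \<times> real) multiset \<Rightarrow> (real ^ 'p) \<times> real \<Rightarrow> real"
    and H :: "(real ^ 'p) multiset \<Rightarrow> real ^ 'p \<Rightarrow> real ^ 'p \<Rightarrow> real"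
    and al :: real
  assumes P_prob: "prob_space P"
    and P_borel: "sets P = sets borel"
    and H_range: "\<And>M x y. 0 \<le> H M x y \<and> H M x y \<le> 1"
    and H_diag: "\<And>M x. H M x x = 1"
    and V_meas: "\<And>j. j \<le> n \<Longrightarrow> (\<lambda>z. Vsc V n z j) \<in> borel_measurable (PiM {..n} (\<lambda>_. P))"
    and H_meas: "\<And>i j. i \<le> n \<Longrightarrow> j \<le> n \<Longrightarrow>
                   (\<lambda>z. Hloc H n z i j) \<in> borel_measurable (PiM {..n} (\<lambda>_. P))"
    and al_pos: "0 < al" and al_lt1: "al < 1"
  shows "measure (PiM {..n} (\<lambda>_. P) \<Otimes>\<^sub>M uniform_measure lborel {0..1})
           {\<omega> \<in> space (PiM {..n} (\<lambda>_. P) \<Otimes>\<^sub>M uniform_measure lborel {0..1}).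
              ereal (Vsc V n (fst \<omega>) n) \<le> QF V H n (fst \<omega>) (atil V H n (fst \<omega>) (snd \<omega>) al)} = al"
proof -
  define \<Omega> where "\<Omega> = PiM {..n} (\<lambda>_. P)"
  define U where "U = uniform_measure lborel {0..1::real}"
  interpret Meas H \<Omega> V n
    using H_range H_diag V_meas H_meas unfolding \<Omega>_def by unfold_locales auto
  have al: "0 < al" "al \<le> 1" using al_pos al_lt1 by auto
  interpret U: prob_space U unfolding U_def by (intro prob_space_uniform_measure) auto
  interpret O: prob_space \<Omega> unfolding \<Omega>_def by (intro prob_space_PiM) (use P_prob in auto)
  have sU: "sets U = sets borel" unfolding U_def by simp
  have spU: "space U = UNIV" unfolding U_def by simp
  define a1 where "a1 z = atil1 V H n z al" for z
  define a2 where "a2 z = atil2 V H n z al" for z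
  define c1 where "c1 z = acv V H n z (a1 z)" for z
  define c2 where "c2 z = acv V H n z (a2 z)" for z
  define p where "p z = (al - c2 z) / (c1 z - c2 z)" for z
  define s where "s z i = sc V H n z i" for z i
  define f where "f i z = (if s z i < a1 z then p z else 0) + (if s z i < a2 z then 1 - p z else 0)" for i z
  have c1ge: "al \<le> c1 z" for z unfolding c1_def a1_def using c1_ge[OF al] .
  have c2lt: "c2 z < al" for z unfolding c2_def a2_def using c2_lt[OF al] .
  have a21: "a2 z < a1 z" for z unfolding a1_def a2_def using a2_lt_a1[OF al] .
  have p01: "0 < p z" "p z \<le> 1" for z unfolding p_def using c1ge[of z] c2lt[of z] by (auto simp: field_simps)
  have atil_eq: "atil V H n z u al = (if u \<le> p z then a1 z else a2 z)" for z u
    unfolding atil_def Let_def p_def c1_def c2_def a1_def a2_def acov_eq ..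
  have a1m: "a1 \<in> borel_measurable \<Omega>" unfolding a1_def using a1_meas[OF al] .
  have a2m: "a2 \<in> borel_measurable \<Omega>" unfolding a2_def using a2_meas[OF al] .
  have pm: "p \<in> borel_measurable \<Omega>" unfolding p_def c1_def c2_def
    by (intro borel_measurable_divide borel_measurable_diff borel_measurable_const acv_meas a1m a2m)
  have sm: "i \<le> n \<Longrightarrow> (\<lambda>z. s z i) \<in> borel_measurable \<Omega>" for i unfolding s_def by (rule sc_meas)
  have fm: "i \<le> n \<Longrightarrow> f i \<in> borel_measurable \<Omega>" for i unfolding f_def
    by (intro borel_measurable_add measurable_If borel_measurable_const borel_measurable_diff pm
          borel_measurable_less sm a1m a2m)
  define E where "E = {\<omega> \<in> space (\<Omega> \<Otimes>\<^sub>M U). s (fst \<omega>) n < (if snd \<omega> \<le> p (fst \<omega>) then a1 (fst \<omega>) else a2 (fst \<omega>))}"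
  have Eeq: "{\<omega> \<in> space (PiM {..n} (\<lambda>_. P) \<Otimes>\<^sub>M uniform_measure lborel {0..1}).
              ereal (Vsc V n (fst \<omega>) n) \<le> QF V H n (fst \<omega>) (atil V H n (fst \<omega>) (snd \<omega>) al)} = E"
    unfolding E_def \<Omega>_def[symmetric] U_def[symmetric] QF_char atil_eq s_def ..
  have sndm: "snd \<in> borel_measurable (\<Omega> \<Otimes>\<^sub>M U)"
    using measurable_snd[of \<Omega> U] by (simp add: measurable_cong_sets[OF refl sU])
  have Em: "E \<in> sets (\<Omega> \<Otimes>\<^sub>M U)" unfolding E_def
    by (intro borel_measurable_less measurable_If measurable_compose[OF measurable_fst] sm a1m a2m
          borel_measurable_le sndm pm) auto
  have step1: "emeasure (\<Omega> \<Otimes>\<^sub>M U) E = (\<integral>\<^sup>+z. ennreal (f n z) \<partial>\<Omega>)"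
  proof -
    have "emeasure (\<Omega> \<Otimes>\<^sub>M U) E = (\<integral>\<^sup>+z. emeasure U (Pair z -` E) \<partial>\<Omega>)"
      by (rule U.emeasure_pair_measure_alt[OF Em])
    also have "\<dots> = (\<integral>\<^sup>+z. ennreal (f n z) \<partial>\<Omega>)"
    proof (rule nn_integral_cong)
      fix z assume z: "z \<in> space \<Omega>"
      have pre: "Pair z -` E = {u. s z n < (if u \<le> p z then a1 z else a2 z)}"
        unfolding E_def using z by (auto simp: space_pair_measure spU)
      have uI: "emeasure U {..t} = ennreal t" if "0 \<le> t" "t \<le> 1" for t
      proof -
        have "emeasure U {..t} = emeasure lborel ({0..1} \<inter> {..t}) / emeasure lborel {0..1::real}"
          unfolding U_def by (rule emeasure_uniform_measure) auto
        also have "{0..1} \<inter> {..t} = {0..t}" using that by auto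
        finally show ?thesis using that by (simp add: divide_ennreal_def)
      qed
      show "emeasure U (Pair z -` E) = ennreal (f n z)"
      proof (cases "s z n < a2 z")
        case True
        hence "Pair z -` E = space U" unfolding pre spU using a21[of z] by auto
        thus ?thesis using True a21[of z] unfolding f_def by (simp add: U.emeasure_space_1)
      next
        case False
        show ?thesis
        proof (cases "s z n < a1 z")
          case True
          hence "Pair z -` E = {..p z}" unfolding pre using False by auto
          thus ?thesis using True False uI[of "p z"] p01[of z] unfolding f_def by simp
        next
          case F2: False
          hence "Pair z -` E = {}" unfolding pre using False by auto
          thus ?thesis using F2 False unfolding f_def by simp
        qed
      qed
    qed
    finally show ?thesis .
  qed
  have hok: "Hok H" by unfold_locales (use H_range H_diag in auto)
  have step2: "i \<le> n \<Longrightarrow> (\<integral>\<^sup>+z. ennreal (f n z) \<partial>\<Omega>) = (\<integral>\<^sup>+z. ennreal (f i z) \<partial>\<Omega>)" for i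
  proof -
    assume i: "i \<le> n"
    define \<tau> where "\<tau> k = (if k = i then n else if k = n then i else k)" for k
    have tau: "bij_betw \<tau> {..n} {..n}"
      by (rule bij_betw_byWitness[of _ \<tau>]) (use i in \<open>auto simp: \<tau>_def\<close>)
    have inv: "\<And>k. k \<le> n \<Longrightarrow> \<tau> (\<tau> k) = k" by (auto simp: \<tau>_def)
    have tin: "\<And>k. k \<le> n \<Longrightarrow> \<tau> k \<le> n" by (auto simp: \<tau>_def i)
    define \<sigma> where "\<sigma> z = (\<lambda>k\<in>{..n}. z (\<tau> k))" for z :: "nat \<Rightarrow> (real ^ 'p) \<times> real"
    have \<sigma>m: "\<sigma> \<in> measurable \<Omega> \<Omega>" unfolding \<sigma>_def \<Omega>_def
      by (intro measurable_restrict measurable_component_singleton) (auto simp: tin)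
    have dis: "distr \<Omega> \<Omega> \<sigma> = \<Omega>" unfolding \<sigma>_def \<Omega>_def
      using distr_PiM_reindex[of "{..n}" "\<lambda>_. P" \<tau> "{..n}"] P_prob tau
      by (auto simp: bij_betw_def tin)
    have fnm: "(\<lambda>z. ennreal (f n z)) \<in> borel_measurable \<Omega>" using fm[of n] by simp
    have "(\<integral>\<^sup>+z. ennreal (f n z) \<partial>\<Omega>) = (\<integral>\<^sup>+z. ennreal (f n z) \<partial>(distr \<Omega> \<Omega> \<sigma>))"
      using dis by simp
    also have "\<dots> = (\<integral>\<^sup>+z. ennreal (f n (\<sigma> z)) \<partial>\<Omega>)"
      by (rule nn_integral_distr[OF \<sigma>m]) (simp add: dis fnm)
    also have "\<dots> = (\<integral>\<^sup>+z. ennreal (f i z) \<partial>\<Omega>)"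
    proof (rule nn_integral_cong)
      fix z :: "nat \<Rightarrow> (real ^ 'p) \<times> real"
      have zz: "\<And>k. k \<le> n \<Longrightarrow> \<sigma> z k = z (\<tau> k)" unfolding \<sigma>_def by simp
      have ea1: "a1 (\<sigma> z) = a1 z" unfolding a1_def using atil12_perm(1)[of \<tau> n "\<sigma> z" z H V al] tau inv zz hok by blast
      have ea2: "a2 (\<sigma> z) = a2 z" unfolding a2_def using atil12_perm(2)[of \<tau> n "\<sigma> z" z H V al] tau inv zz hok by blast
      have eacv: "\<And>g. acv V H n (\<sigma> z) g = acv V H n z g" using acv_perm[of \<tau> n "\<sigma> z" z] tau zz by blast
      have ep: "p (\<sigma> z) = p z" unfolding p_def c1_def c2_def ea1 ea2 eacv ..
      have es: "s (\<sigma> z) n = s z i" unfolding s_def using sc_perm[of \<tau> n "\<sigma> z" z n V H] tau zz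
        by (simp add: \<tau>_def)
      show "ennreal (f n (\<sigma> z)) = ennreal (f i z)" unfolding f_def ea1 ea2 ep es ..
    qed
    finally show ?thesis .
  qed
  have fnn: "0 \<le> f i z" for i z unfolding f_def using p01[of z] by auto
  have sumeq: "(\<Sum>i\<le>n. f i z) = real (Suc n) * al" for z
  proof -
    define A where "A = (\<Sum>i\<le>n. if s z i < a1 z then 1 else 0::real)"
    define B where "B = (\<Sum>i\<le>n. if s z i < a2 z then 1 else 0::real)"
    have cA: "c1 z = A / real (Suc n)" unfolding c1_def acv_def A_def s_def ..
    have cB: "c2 z = B / real (Suc n)" unfolding c2_def acv_def B_def s_def ..
    have "(\<Sum>i\<le>n. f i z) = (\<Sum>i\<le>n. p z * (if s z i < a1 z then 1 else 0) + (1 - p z) * (if s z i < a2 z then 1 else 0))"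
      unfolding f_def by (intro sum.cong) auto
    also have "\<dots> = p z * A + (1 - p z) * B"
      unfolding A_def B_def by (simp add: sum.distrib sum_distrib_left)
    also have "\<dots> = real (Suc n) * (p z * c1 z + (1 - p z) * c2 z)"
    proof -
      define r where "r = real (Suc n)"
      have r: "r \<noteq> 0" unfolding r_def by simp
      show ?thesis unfolding cA cB r_def[symmetric] using r by (simp add: field_simps)
    qed
    also have "p z * c1 z + (1 - p z) * c2 z = al"
    proof -
      have d: "c1 z - c2 z \<noteq> 0" using c1ge[of z] c2lt[of z] by simp
      have "p z * (c1 z - c2 z) = al - c2 z" unfolding p_def using d by simp
      moreover have "p z * c1 z + (1 - p z) * c2 z = c2 z + p z * (c1 z - c2 z)" by (simp add: algebra_simps)
      ultimately show ?thesis by simp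
    qed
    finally show ?thesis .
  qed
  have step3: "(\<integral>\<^sup>+z. ennreal (f n z) \<partial>\<Omega>) = ennreal al"
  proof -
    let ?X = "(\<integral>\<^sup>+z. ennreal (f n z) \<partial>\<Omega>)"
    have "?X * of_nat (Suc n) = (\<Sum>i\<le>n. ?X)" by (simp add: mult.commute)
    also have "\<dots> = (\<Sum>i\<le>n. (\<integral>\<^sup>+z. ennreal (f i z) \<partial>\<Omega>))"
      by (intro sum.cong) (auto simp: step2)
    also have "\<dots> = (\<integral>\<^sup>+z. (\<Sum>i\<le>n. ennreal (f i z)) \<partial>\<Omega>)"
      by (rule nn_integral_sum[symmetric]) (use fm in auto)
    also have "\<dots> = (\<integral>\<^sup>+z. ennreal (real (Suc n) * al) \<partial>\<Omega>)"
      by (intro nn_integral_cong) (simp add: fnn sumeq)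
    also have "\<dots> = ennreal al * of_nat (Suc n)"
      using O.emeasure_space_1 al by (simp add: ennreal_mult mult.commute ennreal_of_nat_eq_real_of_nat)
    finally have eq: "?X * of_nat (Suc n) = ennreal al * of_nat (Suc n)" .
    have "?X = ?X * of_nat (Suc n) / of_nat (Suc n)" by (rule ennreal_mult_divide_eq[symmetric]) auto
    also have "\<dots> = ennreal al" unfolding eq by (rule ennreal_mult_divide_eq) auto
    finally show ?thesis .
  qed
  have "measure (\<Omega> \<Otimes>\<^sub>M U) E = al" using step1 step3 al by (simp add: measure_def)
  thus ?thesis using Eeq unfolding \<Omega>_def U_def by simp
qed


end
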